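(* Let $A=\{(0,0,0),(0,1,0),(1,0,0),(1,1,0)\}\subset\mathbb{R}^3$ and let $\lambda\subset\mathbb{R}^3$ be the line $x=y=\tfrac12$. Then the set $\Lambda$ of points $P\in\lambda\cap\mathbb{Q}^3$ such that the Euclidean distance $|PQ|$ is rational for every $Q\in A$ is dense in $\lambda$ (with the Euclidean topology).
   Context: No further context is needed. *)

theory Defs
  imports "HOL-Analysis.Analysis"
begin

end

theory Submission
  imports Defs
begin

lemma dist3: "dist (vector [x1,x2,x3]::real^3) (vector [y1,y2,y3]) = sqrt((x1-y1)^2+(x2-y2)^2+(x3-y3)^2)"
  by (simp add: dist_norm norm_vec_def L2_set_def sum_3 vector_3)

lemma vec3_eq: "(P::real^3) = vector [P$1, P$2, P$3]"
  by (simp add: vec_eq_iff forall_3 vector_3)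

lemma approx:
  fixes z0 e :: real assumes e: "e > 0"
  shows "\<exists>t\<in>\<rat>. t > 0 \<and> \<bar>(t/2 - 1/(4*t)) - z0\<bar> < e"
proof -
  define t0 where "t0 = z0 + sqrt(z0^2+1/2)"
  have s: "sqrt(z0^2+1/2) > \<bar>z0\<bar>"
  proof -
    have "sqrt(z0^2) < sqrt(z0^2+1/2)" by (rule real_sqrt_less_mono) simp
    thus ?thesis by simp
  qed
  hence t0: "t0 > 0" unfolding t0_def by linarith
  have sq: "(sqrt(z0^2+1/2))^2 = z0^2+1/2" by simp
  have ft0: "t0/2 - 1/(4*t0) = z0"
  proof -
    have "t0^2/2 - 1/4 = z0 * t0" unfolding t0_def using sq by (simp add: power2_eq_square algebra_simps)
    thus ?thesis using t0 by (simp add: field_simps power2_eq_square)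
  qed
  define K where "K = 1/2 + 1/(4*t0^2)"
  have K: "K > 0" unfolding K_def using t0 by (intro add_pos_pos) auto
  obtain t where tQ: "t \<in> \<rat>" and tl: "t0 < t" and tu: "t < t0 + e/K"
    using Rats_dense_in_real[of t0 "t0 + e/K"] e K by auto
  have tp: "t > 0" using t0 tl by simp
  have eq: "(t/2 - 1/(4*t)) - z0 = (t - t0) * (1/2 + 1/(4*t*t0))"
  proof -
    have "(t/2 - 1/(4*t)) - (t0/2 - 1/(4*t0)) = (t - t0) * (1/2 + 1/(4*t*t0))"
      using t0 tp by (simp add: field_simps)
    thus ?thesis using ft0 by simp
  qed
  have b: "1/(4*t*t0) \<le> 1/(4*t0^2)"
    using t0 tl by (simp add: frac_le power2_eq_square mult_mono)
  have "\<bar>(t/2 - 1/(4*t)) - z0\<bar> = (t - t0) * (1/2 + 1/(4*t*t0))"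
    using eq tl t0 tp by simp
  also have "\<dots> \<le> (t - t0) * K" unfolding K_def using b tl by (intro mult_left_mono) auto
  also have "\<dots> < (e/K) * K" using tu K by (intro mult_strict_right_mono) auto
  also have "\<dots> = e" using K by simp
  finally show ?thesis using tQ tp by blast
qed

theorem proposition3p1:
  fixes A :: "(real^3) set" and lam Lam :: "(real^3) set"
  assumes "A = {vector [0,0,0], vector [0,1,0], vector [1,0,0], vector [1,1,0]}"
    and "lam = {P. P $ 1 = 1/2 \<and> P $ 2 = 1/2}"
    and "Lam = {P \<in> lam. (\<forall>i. P $ i \<in> \<rat>) \<and> (\<forall>Q\<in>A. dist P Q \<in> \<rat>)}"
  shows "lam \<subseteq> closure Lam"
proof
  fix P assume "P \<in> lam"
  hence P1: "P$1 = 1/2" and P2: "P$2 = 1/2" using assms(2) by auto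
  show "P \<in> closure Lam"
    unfolding closure_approachable
  proof (intro allI impI)
    fix e :: real assume e: "e > 0"
    obtain t where tQ: "t \<in> \<rat>" and tp: "t > 0" and close: "\<bar>(t/2 - 1/(4*t)) - P$3\<bar> < e"
      using approx[OF e] by blast
    define z where "z = t/2 - 1/(4*t)"
    define w where "w = t/2 + 1/(4*t)"
    define Q :: "real^3" where "Q = vector [1/2, 1/2, z]"
    have zQ: "z \<in> \<rat>" and wQ: "w \<in> \<rat>" unfolding z_def w_def using tQ by auto
    have wp: "w > 0" unfolding w_def using tp by (intro add_pos_pos) auto
    have ww: "1/2 + z^2 = w^2" unfolding z_def w_def using tp
      by (simp add: power2_eq_square field_simps)
    have d: "sqrt (1/2 + z^2) = w" using ww wp by simp
    have "dist Q P = sqrt((z - P$3)^2)"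
      by (subst vec3_eq[of P]) (simp add: Q_def dist3 P1 P2)
    also have "\<dots> < e" using close by (simp add: z_def)
    finally have dQP: "dist Q P < e" .
    have "Q \<in> Lam"
    proof -
      have "Q \<in> lam" using assms(2) by (simp add: Q_def vector_3)
      moreover have "\<forall>i. Q $ i \<in> \<rat>" using zQ by (simp add: forall_3 Q_def vector_3)
      moreover have "\<forall>R\<in>A. dist Q R \<in> \<rat>"
        using assms(1) d wQ by (auto simp: Q_def dist3 power2_eq_square)
      ultimately show ?thesis using assms(3) by simp
    qed
    thus "\<exists>y\<in>Lam. dist y P < e" using dQP by blast
  qed
qed

end
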